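(* The transducer $\mathcal O_H$ generates the optimal configurations in the Hanoi Towers Problem. More precisely, for $x,y \in\{0,1,2\}$, $x \neq y$, starting at state $t_{xy}$, and feeding the reversal $m_i(n)^R$ of the length $n$ row $i$ binary Gray code word from $M_n$ into $\mathcal O_H$ produces the reverse of the length $n$ ternary word representing the unique $n$ disk configuration at distance $i$ along the geodesic from $x^n$ to $y^n$ in $\Gamma_n$.
   Context: Let $X_2=\{0,1\}$, $X_3=\{0,1,2\}$. Define matrices $M_n$ of size $2^n \times n$ with entries in $X_2$ by $M_1 = \begin{bmatrix} 0 \\ 1 \end{bmatrix}$, $M_{n+1} = \begin{bmatrix} M_n & 0_n \\ M_n^R & 1_n \end{bmatrix}$, where $M_n^R$ is $M_n$ with the order of rows reversed and $0_n,1_n$ are constant columns of length $2^n$; $m_i(n)$ is row $i$ of $M_n$ (rows indexed from $0$). In the Hanoi Towers Problem on pegs $0,1,2$ with disks $1,\dots,n$, a configuration is encoded by the word $x_1\dots x_n$ over $X_3$, meaning disk $i$ is on peg $x_i$. For $0\le i<j\le 2$ let $a_{ij}$ be the ternary tree automorphism changing the first occurrence of $i$ or $j$ in a word to the other symbol (a move between pegs $i$ and $j$), and let $\Gamma_n$ be the graph whose vertices are the words of length $n$ over $X_3$, with an edge between $w$ and $a_{ij}(w)$ for each $a_{ij}$ (the Schreier graph of the Hanoi Towers group at level $n$). The 2 to 3 transducer $\mathcal O_H$ has six states $t_{xy}$, $x\ne y$ in $X_3$, defined as follows: if $z$ is the third element of $X_3$, then $t_{xy}(0w)=x\,t_{xz}(w)$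 and $t_{xy}(1w)=y\,t_{yz}(w)$, and $t_{xy}(\emptyset)=\emptyset$. *)

theory Defs
  imports Main
begin

(* Binary reflected Gray code matrix M_n as the list of its rows (row i = m_i(n)).
   M 0 = [[]] is an auxiliary base; the recursion yields M 1 = [[0],[1]]. *)
fun grayM :: "nat \<Rightarrow> nat list list" where
  "grayM 0 = [[]]"
| "grayM (Suc n) = map (\<lambda>r. r @ [0]) (grayM n) @ map (\<lambda>r. r @ [1]) (rev (grayM n))"

fun hmove :: "nat \<Rightarrow> nat \<Rightarrow> nat list \<Rightarrow> nat list" where
  "hmove i j [] = []"
| "hmove i j (c # w) = (if c = i then j # w else if c = j then i # w else c # hmove i j w)"

definition hverts :: "nat \<Rightarrow> nat list set" where
  "hverts n = {w. length w = n \<and> set w \<subseteq> {0,1,2}}"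

definition hedges :: "nat \<Rightarrow> (nat list \<times> nat list) set" where
  "hedges n = {(u, v). u \<in> hverts n \<and> (\<exists>i j. i < j \<and> j \<le> 2 \<and> v = hmove i j u)}"

definition hdist :: "nat \<Rightarrow> nat list \<Rightarrow> nat list \<Rightarrow> nat" where
  "hdist n u v = (LEAST k. (u, v) \<in> hedges n ^^ k)"

definition on_geodesic :: "nat \<Rightarrow> nat list \<Rightarrow> nat list \<Rightarrow> nat \<Rightarrow> nat list \<Rightarrow> bool" where
  "on_geodesic n u v i w \<longleftrightarrow> w \<in> hverts n \<and> hdist n u w = i \<and>
     hdist n u w + hdist n w v = hdist n u v"

(* the 2-to-3 transducer O_H; state t_xy is the pair (x,y), z = 3 - x - y the third peg *)
fun transOH :: "nat \<Rightarrow> nat \<Rightarrow> nat list \<Rightarrow> nat list" where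
  "transOH x y [] = []"
| "transOH x y (b # w) =
     (if b = 0 then x # transOH x (3 - x - y) w else y # transOH y (3 - x - y) w)"

end

theory Submission
  imports Defs
begin


fun Dr :: "nat list \<Rightarrow> nat \<Rightarrow> nat" where
  "Dr [] p = 0"
| "Dr (c # v) p = (if c = p then Dr v p else Dr v (3 - c - p) + 2 ^ length v)"

definition DD :: "nat list \<Rightarrow> nat \<Rightarrow> nat" where "DD w p = Dr (rev w) p"

lemma DD_Nil[simp]: "DD [] p = 0" by (simp add: DD_def)
lemma DD_snoc[simp]: "DD (u @ [c]) p = (if c = p then DD u p else DD u (3 - c - p) + 2 ^ length u)"
  by (simp add: DD_def)

lemma DD_rep: "q < 3 \<Longrightarrow> p < 3 \<Longrightarrow> DD (replicate m q) p = (if q = p then 0 else 2 ^ m - 1)"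
proof -
  assume q: "q < 3" and p: "p < 3"
  have "Dr (replicate m q) p = (if q = p then 0 else 2 ^ m - 1)" using p
  proof (induction m arbitrary: p)
    case 0 then show ?case by simp
  next
    case (Suc m)
    show ?case
    proof (cases "q = p")
      case True then show ?thesis using Suc by simp
    next
      case False
      have "3 - q - p < 3" using False Suc.prems q by auto
      moreover have "3 - q - p \<noteq> q" using False Suc.prems q by presburger
      then show ?thesis using Suc False by simp
    qed
  qed
  then show ?thesis by (simp add: DD_def)
qed

lemma DD_le: "set u \<subseteq> {0,1,2} \<Longrightarrow> DD u p \<le> 2 ^ length u - 1"
proof (induction u arbitrary: p rule: rev_induct)
  case Nil then show ?case by simp
next
  case (snoc c u)
  have "DD u p \<le> 2 ^ length u - 1" "DD u (3 - c - p) \<le> 2 ^ length u - 1" using snoc by auto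
  then show ?case by auto
qed

lemma hmove_length[simp]: "length (hmove i j w) = length w"
  by (induction w) auto

lemma hmove_set: "set w \<subseteq> {0,1,2} \<Longrightarrow> i \<le> 2 \<Longrightarrow> j \<le> 2 \<Longrightarrow> set (hmove i j w) \<subseteq> {0,1,2}"
  by (induction w) auto

lemma hmove_invol: "hmove i j (hmove i j w) = w"
  by (induction w) auto

lemma hmove_id: "i \<notin> set w \<Longrightarrow> j \<notin> set w \<Longrightarrow> hmove i j w = w"
  by (induction w) auto

lemma hmove_snoc: "hmove i j (u @ [c]) = (if i \<in> set u \<or> j \<in> set u then hmove i j u @ [c]
   else if c = i then u @ [j] else if c = j then u @ [i] else u @ [c])"
  by (induction u) auto

lemma hmove_comm: "hmove i j w = hmove j i w"
  by (induction w) auto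

lemma hverts_iff: "w \<in> hverts n \<longleftrightarrow> length w = n \<and> set w \<subseteq> {0,1,2}"
  by (simp add: hverts_def)

lemma hedges_sym: "(u, v) \<in> hedges n \<Longrightarrow> (v, u) \<in> hedges n"
proof -
  assume "(u, v) \<in> hedges n"
  then obtain i j where ij: "u \<in> hverts n" "i < j" "j \<le> 2" "v = hmove i j u" unfolding hedges_def by blast
  then have "v \<in> hverts n" using hmove_set[of u i j] by (simp add: hverts_iff)
  moreover have "u = hmove i j v" using ij hmove_invol by simp
  ultimately show ?thesis using ij unfolding hedges_def by blast
qed

lemma relpow_sym: "(u, v) \<in> hedges n ^^ k \<Longrightarrow> (v, u) \<in> hedges n ^^ k"
proof (induction k arbitrary: v)
  case 0 then show ?case by simp
next
  case (Suc k)
  from Suc.prems obtain y where "(u, y) \<in> hedges n ^^ k" "(y, v) \<in> hedges n" by (rule relpow_Suc_E)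
  then show ?case using Suc.IH hedges_sym relpow_Suc_I2 by metis
qed

lemma hedges_verts: "(u, v) \<in> hedges n \<Longrightarrow> v \<in> hverts n \<and> u \<in> hverts n"
proof -
  assume "(u, v) \<in> hedges n"
  then obtain i j where ij: "u \<in> hverts n" "i < j" "j \<le> 2" "v = hmove i j u" unfolding hedges_def by blast
  then have "v \<in> hverts n" using hmove_set[of u i j] by (simp add: hverts_iff)
  then show ?thesis using ij by blast
qed

lemma DD_lip: "set w \<subseteq> {0,1,2} \<Longrightarrow> i < j \<Longrightarrow> j \<le> 2 \<Longrightarrow> p < 3 \<Longrightarrow>
   DD w p \<le> DD (hmove i j w) p + 1 \<and> DD (hmove i j w) p \<le> DD w p + 1"
proof (induction w arbitrary: p rule: rev_induct)
  case Nil then show ?case by simp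
next
  case (snoc c u)
  show ?case
  proof (cases "i \<in> set u \<or> j \<in> set u")
    case True
    have "c \<noteq> p \<Longrightarrow> 3 - c - p < 3" by simp
    then show ?thesis using snoc True by (simp add: hmove_snoc)
  next
    case False
    define k where "k = 3 - i - j"
    have "\<forall>y\<in>set u. y = k"
    proof
      fix y assume "y \<in> set u"
      then have "y \<in> {0,1,2}" "y \<noteq> i" "y \<noteq> j" using False snoc.prems by auto
      then show "y = k" unfolding k_def using snoc.prems by auto
    qed
    then have u: "u = replicate (length u) k" by (simp add: replicate_length_same)
    have c: "c \<in> {0,1,2}" "i \<in> {0,1}" "j \<in> {1,2}" "p \<in> {0,1,2}" using snoc.prems by auto
    define m where "m = length u"
    have hm: "hmove i j (u @ [c]) = (if c = i then u @ [j] else if c = j then u @ [i] else u @ [c])"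
      using False by (simp add: hmove_snoc)
    have ij: "(i = 0 \<and> j = 1) \<or> (i = 0 \<and> j = 2) \<or> (i = 1 \<and> j = 2)" using snoc.prems by auto
    have cc: "c = 0 \<or> c = 1 \<or> c = 2" and pp: "p = 0 \<or> p = 1 \<or> p = 2" using c by auto
    have k3: "k < 3" unfolding k_def using snoc.prems by auto
    have R: "\<And>r. r < 3 \<Longrightarrow> DD u r = (if k = r then 0 else 2 ^ m - 1)"
      using DD_rep[OF k3] u unfolding m_def by metis
    have lu: "length u = m" by (simp add: m_def)
    show ?thesis unfolding hm using ij cc pp
      by (elim disjE) (simp_all add: R lu k_def)
  qed
qed



lemma lt3: "(x::nat) < 3 \<Longrightarrow> x \<in> {0,1,2}"
  by (auto simp: numeral_3_eq_3 less_Suc_eq)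

lemma rep_set: "(x::nat) < 3 \<Longrightarrow> set (replicate m x) \<subseteq> {0,1,2}"
  using lt3 by auto

lemma lower: "(w, v) \<in> hedges n ^^ k \<Longrightarrow> w \<in> hverts n \<Longrightarrow> p < 3 \<Longrightarrow> v = replicate n p \<Longrightarrow> DD w p \<le> k"
proof (induction k arbitrary: w)
  case 0 then show ?case using DD_rep[of p p n] by simp
next
  case (Suc k)
  from Suc.prems(1) obtain y where wy: "(w, y) \<in> hedges n" and yv: "(y, v) \<in> hedges n ^^ k" by (rule relpow_Suc_E2)
  from wy obtain i j where ij: "i < j" "j \<le> 2" "y = hmove i j w" unfolding hedges_def by auto
  have "y \<in> hverts n" using wy hedges_verts by blast
  then have "DD y p \<le> k" using Suc.IH[OF yv _ Suc.prems(3,4)] by blast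
  moreover have "DD w p \<le> DD y p + 1" using DD_lip[of w i j p] ij Suc.prems(2,3) unfolding hverts_iff by blast
  ultimately show ?case by simp
qed

lemma lift: "(u, v) \<in> hedges m ^^ k \<Longrightarrow> c < 3 \<Longrightarrow> \<exists>k'\<le>k. (u @ [c], v @ [c]) \<in> hedges (Suc m) ^^ k'"
proof (induction k arbitrary: v)
  case 0 then show ?case by (intro exI[of _ 0]) simp
next
  case (Suc k)
  from Suc.prems(1) obtain y where uy: "(u, y) \<in> hedges m ^^ k" and yv: "(y, v) \<in> hedges m" by (rule relpow_Suc_E)
  obtain k' where k': "k' \<le> k" "(u @ [c], y @ [c]) \<in> hedges (Suc m) ^^ k'" using Suc uy by blast
  from yv obtain i j where ij: "i < j" "j \<le> 2" "v = hmove i j y" "y \<in> hverts m" unfolding hedges_def by auto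
  show ?case
  proof (cases "v = y")
    case True then show ?thesis using k' by (intro exI[of _ k']) simp
  next
    case False
    then have "i \<in> set y \<or> j \<in> set y" using ij hmove_id by metis
    then have "hmove i j (y @ [c]) = v @ [c]" using ij by (simp add: hmove_snoc)
    moreover have "y @ [c] \<in> hverts (Suc m)" using ij Suc.prems by (auto simp: hverts_iff)
    moreover have "(y @ [c], hmove i j (y @ [c])) \<in> hedges (Suc m)"
      unfolding hedges_def using ij \<open>y @ [c] \<in> hverts (Suc m)\<close> by blast
    ultimately have "(y @ [c], v @ [c]) \<in> hedges (Suc m)" by simp
    then show ?thesis using k' relpow_Suc_I by (intro exI[of _ "Suc k'"]) auto
  qed
qed

lemma upper: "length w = m \<Longrightarrow> set w \<subseteq> {0,1,2} \<Longrightarrow> p < 3 \<Longrightarrow>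
   \<exists>k\<le>DD w p. (w, replicate m p) \<in> hedges m ^^ k"
proof (induction m arbitrary: w p)
  case 0 then show ?case by (intro exI[of _ 0]) simp
next
  case (Suc m)
  obtain u c where w: "w = u @ [c]" using Suc.prems(1) by (metis length_Suc_conv_rev)
  have u: "length u = m" "set u \<subseteq> {0,1,2}" and c: "c < 3" using Suc.prems w by auto
  have r: "replicate (Suc m) p = replicate m p @ [p]" by (simp add: replicate_append_same)
  show ?case
  proof (cases "c = p")
    case True
    obtain k where "k \<le> DD u p" "(u, replicate m p) \<in> hedges m ^^ k" using Suc.IH u Suc.prems by blast
    then obtain k' where "k' \<le> DD u p" "(u @ [c], replicate m p @ [c]) \<in> hedges (Suc m) ^^ k'"
      using lift c by (meson le_trans)
    then show ?thesis using True w r by (intro exI[of _ k']) simp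
  next
    case False
    define e where "e = 3 - c - p"
    have e: "e < 3" "e \<noteq> c" "e \<noteq> p" unfolding e_def using False c Suc.prems by presburger+
    obtain k1 where "k1 \<le> DD u e" "(u, replicate m e) \<in> hedges m ^^ k1" using Suc.IH u e by blast
    then obtain k1' where k1: "k1' \<le> DD u e" "(u @ [c], replicate m e @ [c]) \<in> hedges (Suc m) ^^ k1'"
      using lift c by (meson le_trans)
    obtain k2 where k2a: "k2 \<le> DD (replicate m e) p" and k2b: "(replicate m e, replicate m p) \<in> hedges m ^^ k2"
      using Suc.IH[of "replicate m e" p] e rep_set[of e m] Suc.prems by auto
    obtain k2' where k2'a: "k2' \<le> k2" and k2'b: "(replicate m e @ [p], replicate m p @ [p]) \<in> hedges (Suc m) ^^ k2'"
      using lift[OF k2b] Suc.prems by blast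
    have k2: "k2' \<le> 2 ^ m - 1" "(replicate m e @ [p], replicate m p @ [p]) \<in> hedges (Suc m) ^^ k2'"
      using k2a k2'a k2'b DD_rep[of e p m] e Suc.prems by auto
    have hm: "hmove (min c p) (max c p) (replicate m e @ [c]) = replicate m e @ [p]"
      using e False by (auto simp: hmove_snoc min_def max_def)
    have hv: "replicate m e @ [c] \<in> hverts (Suc m)" using e c rep_set[of e m] lt3[of c] by (auto simp: hverts_iff)
    have mm: "min c p < max c p" "max c p \<le> 2" using False c Suc.prems by auto
    have "(replicate m e @ [c], hmove (min c p) (max c p) (replicate m e @ [c])) \<in> hedges (Suc m)"
      unfolding hedges_def using mm hv by blast
    then have st: "(replicate m e @ [c], replicate m e @ [p]) \<in> hedges (Suc m)" using hm by simp
    have p1: "(w, replicate m e @ [c]) \<in> hedges (Suc m) ^^ k1'" using k1 w by simp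
    have p2: "(replicate m e @ [c], replicate (Suc m) p) \<in> hedges (Suc m) ^^ Suc k2'"
      using relpow_Suc_I2[OF st k2(2)] r by simp
    have "(w, replicate (Suc m) p) \<in> hedges (Suc m) ^^ (k1' + Suc k2')"
      unfolding relpow_add using p1 p2 by blast
    moreover have "k1' + Suc k2' \<le> DD w p"
    proof -
      have dw: "DD w p = DD u e + 2 ^ m" using w False u(1) e_def by simp
      have "(1::nat) \<le> 2 ^ m" by simp
      then show ?thesis using dw k1(1) k2(1) by linarith
    qed
    ultimately show ?thesis by blast
  qed
qed



lemma hdist_to: assumes "set w \<subseteq> {0,1,2}" "p < 3"
  shows "hdist (length w) w (replicate (length w) p) = DD w p"
proof -
  let ?P = "\<lambda>k. (w, replicate (length w) p) \<in> hedges (length w) ^^ k"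
  obtain k where k: "k \<le> DD w p" "?P k" using upper[OF refl assms] by blast
  have "Least ?P \<le> k" using k(2) by (rule Least_le)
  moreover have "?P (Least ?P)" using k(2) by (rule LeastI)
  then have "DD w p \<le> Least ?P" using lower assms by (auto simp: hverts_iff)
  ultimately show ?thesis unfolding hdist_def using k(1) by linarith
qed

lemma hdist_comm: "hdist n a b = hdist n b a"
proof -
  have "(\<lambda>k. (a, b) \<in> hedges n ^^ k) = (\<lambda>k. (b, a) \<in> hedges n ^^ k)"
    using relpow_sym by blast
  then show ?thesis unfolding hdist_def by simp
qed

lemma hdist_from: assumes "set w \<subseteq> {0,1,2}" "p < 3"
  shows "hdist (length w) (replicate (length w) p) w = DD w p"
  using hdist_to[OF assms] hdist_comm by metis

lemma length_grayM: "length (grayM n) = 2 ^ n"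
  by (induction n) auto

lemma grayM_Suc_nth: assumes "i < 2 ^ Suc n"
  shows "grayM (Suc n) ! i = (if i < 2 ^ n then grayM n ! i @ [0] else grayM n ! (2 ^ Suc n - 1 - i) @ [1])"
proof (cases "i < 2 ^ n")
  case True then show ?thesis by (simp add: nth_append length_grayM)
next
  case False
  have "grayM (Suc n) ! i = rev (grayM n) ! (i - 2 ^ n) @ [1]"
    using False assms by (simp add: nth_append length_grayM)
  also have "\<dots> = grayM n ! (2 ^ Suc n - 1 - i) @ [1]"
  proof -
    have "i - 2 ^ n < length (grayM n)" using False assms by (simp add: length_grayM)
    moreover have "length (grayM n) - Suc (i - 2 ^ n) = 2 ^ Suc n - 1 - i"
      using False assms by (simp add: length_grayM)
    ultimately show ?thesis by (simp add: rev_nth)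
  qed
  finally show ?thesis using False by simp
qed

definition gg :: "nat \<Rightarrow> nat \<Rightarrow> nat \<Rightarrow> nat \<Rightarrow> nat list" where
  "gg n x y i = rev (transOH x y (rev (grayM n ! i)))"

lemma gg_Suc: assumes "i < 2 ^ Suc n"
  shows "gg (Suc n) x y i = (if i < 2 ^ n then gg n x (3 - x - y) i @ [x]
     else gg n y (3 - x - y) (2 ^ Suc n - 1 - i) @ [y])"
  unfolding gg_def grayM_Suc_nth[OF assms] by simp

lemma third: "(x::nat) < 3 \<Longrightarrow> y < 3 \<Longrightarrow> x \<noteq> y \<Longrightarrow> 3 - x - y < 3 \<and> 3 - x - y \<noteq> x \<and> 3 - x - y \<noteq> y \<and> 3 - y - x = 3 - x - y"
  by presburger

lemma gg_props: "x < 3 \<Longrightarrow> y < 3 \<Longrightarrow> x \<noteq> y \<Longrightarrow> i < 2 ^ n \<Longrightarrow>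
  length (gg n x y i) = n \<and> set (gg n x y i) \<subseteq> {0,1,2} \<and> DD (gg n x y i) x = i \<and> DD (gg n x y i) y = 2 ^ n - 1 - i"
proof (induction n arbitrary: x y i)
  case 0 then show ?case by (simp add: gg_def)
next
  case (Suc n)
  define z where "z = 3 - x - y"
  have z: "z < 3" "z \<noteq> x" "z \<noteq> y" "3 - y - x = z" using third[OF Suc.prems(1-3)] z_def by auto
  have x3: "x \<in> {0,1,2}" "y \<in> {0,1,2}" using Suc.prems lt3 by auto
  show ?case
  proof (cases "i < 2 ^ n")
    case True
    have IH: "length (gg n x z i) = n \<and> set (gg n x z i) \<subseteq> {0,1,2} \<and> DD (gg n x z i) x = i \<and> DD (gg n x z i) z = 2 ^ n - 1 - i"
      using Suc.IH[of x z i] Suc.prems z True by auto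
    have e: "gg (Suc n) x y i = gg n x z i @ [x]" using gg_Suc[OF Suc.prems(4)] True z_def by simp
    have d1: "DD (gg n x z i @ [x]) x = i" using IH by simp
    have d2: "DD (gg n x z i @ [x]) y = DD (gg n x z i) z + 2 ^ n" using IH Suc.prems(3) z_def by simp
    have ar: "2 ^ n - 1 - i + 2 ^ n = 2 ^ Suc n - 1 - (i::nat)" using True by simp
    show ?thesis unfolding e using IH x3 d1 d2 ar by simp
  next
    case False
    define j where "j = 2 ^ Suc n - 1 - i"
    have j: "j < 2 ^ n" using False Suc.prems(4) j_def by simp
    have IH: "length (gg n y z j) = n \<and> set (gg n y z j) \<subseteq> {0,1,2} \<and> DD (gg n y z j) y = j \<and> DD (gg n y z j) z = 2 ^ n - 1 - j"
      using Suc.IH[of y z j] Suc.prems z j by auto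
    have e: "gg (Suc n) x y i = gg n y z j @ [y]" using gg_Suc[OF Suc.prems(4)] False z_def j_def by simp
    have d1: "DD (gg n y z j @ [y]) y = j" using IH by simp
    have d2: "DD (gg n y z j @ [y]) x = DD (gg n y z j) z + 2 ^ n" using IH Suc.prems(3) z by simp
    have ar: "2 ^ n - 1 - j + 2 ^ n = i" "j = 2 ^ Suc n - 1 - i" using j j_def False Suc.prems(4) by auto
    show ?thesis unfolding e using IH x3 d1 d2 ar by simp
  qed
qed

lemma gg_unique: "length w = n \<Longrightarrow> set w \<subseteq> {0,1,2} \<Longrightarrow> x < 3 \<Longrightarrow> y < 3 \<Longrightarrow> x \<noteq> y \<Longrightarrow>
  DD w x + DD w y = 2 ^ n - 1 \<Longrightarrow> w = gg n x y (DD w x)"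
proof (induction n arbitrary: w x y)
  case 0 then show ?case by (simp add: gg_def)
next
  case (Suc n)
  define z where "z = 3 - x - y"
  have z: "z < 3" "z \<noteq> x" "z \<noteq> y" "3 - y - x = z" using third[OF Suc.prems(3-5)] z_def by auto
  obtain u c where w: "w = u @ [c]" using Suc.prems(1) by (metis length_Suc_conv_rev)
  have u: "length u = n" "set u \<subseteq> {0,1,2}" and c: "c < 3" using Suc.prems w by auto
  have dl: "DD u q \<le> 2 ^ n - 1" for q using DD_le[OF u(2)] u(1) by simp
  have p1: "(1::nat) \<le> 2 ^ n" by simp
  have cases: "c = x \<or> c = y \<or> c = z" using lt3[OF c] lt3[OF Suc.prems(3)] lt3[OF Suc.prems(4)] Suc.prems(5) z_def by auto
  moreover
  { assume cx: "c = x"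
    have d1: "DD w x = DD u x" "DD w y = DD u z + 2 ^ n" using w cx z_def u(1) Suc.prems(5) by auto
    have s: "DD u x + DD u z = 2 ^ n - 1" using Suc.prems(6) d1 by simp
    have "u = gg n x z (DD u x)" using Suc.IH[OF u Suc.prems(3) z(1) _ s] z by auto
    moreover have "DD u x < 2 ^ n" using dl[of x] p1 by linarith
    ultimately have ?case using gg_Suc[of "DD u x" n x y] d1 w cx z_def by simp }
  moreover
  { assume cy: "c = y"
    have d1: "DD w x = DD u z + 2 ^ n" "DD w y = DD u y" using w cy z u(1) Suc.prems(5) by auto
    have s: "DD u y + DD u z = 2 ^ n - 1" using Suc.prems(6) d1 by simp
    have "u = gg n y z (DD u y)" using Suc.IH[OF u Suc.prems(4) z(1) _ s] z by auto
    moreover have "DD w x < 2 ^ Suc n" "\<not> DD w x < 2 ^ n" "2 ^ Suc n - 1 - DD w x = DD u y"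
    proof -
      have a: "DD u z < 2 ^ n" using dl[of z] p1 by linarith
      have b: "(2::nat) ^ Suc n = 2 ^ n + 2 ^ n" by simp
      show "DD w x < 2 ^ Suc n" using a b d1 by linarith
      show "\<not> DD w x < 2 ^ n" using d1 by linarith
      show "2 ^ Suc n - 1 - DD w x = DD u y" using a b d1 s p1 by linarith
    qed
    ultimately have ?case using gg_Suc[of "DD w x" n x y] w cy z_def by simp }
  moreover
  { assume cz: "c = z"
    have "DD w x \<ge> 2 ^ n" "DD w y \<ge> 2 ^ n" using w cz z u(1) Suc.prems(5) by auto
    moreover have "(2::nat) ^ Suc n = 2 ^ n + 2 ^ n" by simp
    ultimately have False using Suc.prems(6) p1 by linarith }
  ultimately show ?case by blast
qed

theorem mainTheorem12:
  fixes n i x y :: nat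
  assumes "1 \<le> n" and "x < 3" and "y < 3" and "x \<noteq> y" and "i < 2 ^ n"
  shows "(\<exists>!w. on_geodesic n (replicate n x) (replicate n y) i w) \<and>
         on_geodesic n (replicate n x) (replicate n y) i
           (rev (transOH x y (rev (grayM n ! i))))"
proof -
  have geo: "on_geodesic n (replicate n x) (replicate n y) i w \<longleftrightarrow>
     (length w = n \<and> set w \<subseteq> {0,1,2} \<and> DD w x = i \<and> DD w x + DD w y = 2 ^ n - 1)" for w
  proof -
    have xy: "hdist n (replicate n x) (replicate n y) = 2 ^ n - 1"
      using hdist_from[of "replicate n y" x] rep_set[of y n] assms DD_rep[of y x n] by simp
    show ?thesis
    proof
      assume "on_geodesic n (replicate n x) (replicate n y) i w"
      then have h: "length w = n" "set w \<subseteq> {0,1,2}" "hdist n (replicate n x) w = i"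
        "hdist n (replicate n x) w + hdist n w (replicate n y) = hdist n (replicate n x) (replicate n y)"
        unfolding on_geodesic_def hverts_iff by auto
      then show "length w = n \<and> set w \<subseteq> {0,1,2} \<and> DD w x = i \<and> DD w x + DD w y = 2 ^ n - 1"
        using hdist_from[OF h(2) assms(2)] hdist_to[OF h(2) assms(3)] xy by simp
    next
      assume h: "length w = n \<and> set w \<subseteq> {0,1,2} \<and> DD w x = i \<and> DD w x + DD w y = 2 ^ n - 1"
      then show "on_geodesic n (replicate n x) (replicate n y) i w"
        unfolding on_geodesic_def hverts_iff
        using hdist_from[of w x] hdist_to[of w y] xy assms by auto
    qed
  qed
  have P: "length (gg n x y i) = n \<and> set (gg n x y i) \<subseteq> {0,1,2} \<and> DD (gg n x y i) x = i \<and> DD (gg n x y i) y = 2 ^ n - 1 - i"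
    using gg_props assms by blast
  then have g: "on_geodesic n (replicate n x) (replicate n y) i (gg n x y i)"
    using geo assms(5) by auto
  have "w = gg n x y i" if "on_geodesic n (replicate n x) (replicate n y) i w" for w
    using gg_unique[of w n x y] that geo assms by auto
  then have "\<exists>!w. on_geodesic n (replicate n x) (replicate n y) i w" using g by blast
  then show ?thesis using g unfolding gg_def by simp
qed

end
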